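(* Let $f:\mathbb{F}_q^k\to\mathrm{Im}(f)$ with $|\mathrm{Im}(f)|\ge2$ be $d_d$-locally binary, where $d_d\ge1$, and suppose there exists a linear MDS $[n,k,d_d]$ code over $\mathbb{F}_q$ (so $d_d=n-k+1$). Then $r_f(k:d_d,d_d+1)=d_d$.
   Context: $d(\cdot,\cdot)$ is Hamming distance. $B_f(u,\rho)=\{f(u'):d(u,u')\le\rho\}$; $f$ is $\rho$-locally binary if $|B_f(u,\rho)|\le2$ for all $u$. For integers $0\le d_d\le d_f$, an $(f\!:d_d,d_f)$-FCC with redundancy $r$ is a systematic encoding $\mathfrak{C}_f(u)=(u,p_u)\in\mathbb{F}_q^{k+r}$ with $d(\mathfrak{C}_f(u_1),\mathfrak{C}_f(u_2))\ge d_d$ whenever $u_1\ne u_2$ and $\ge d_f$ whenever $f(u_1)\ne f(u_2)$; $r_f(k:d_d,d_f)$ is the minimum such $r$. *)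

theory Defs
  imports Main
begin

definition vecs :: "nat \<Rightarrow> 'a list set" where
  "vecs m = {x. length x = m}"

definition hamming :: "'a list \<Rightarrow> 'a list \<Rightarrow> nat" where
  "hamming x y = card {i. i < length x \<and> x ! i \<noteq> y ! i}"

definition ball_img :: "('a list \<Rightarrow> 'b) \<Rightarrow> nat \<Rightarrow> 'a list \<Rightarrow> nat \<Rightarrow> 'b set" where
  "ball_img f k u \<rho> = {f u' | u'. u' \<in> vecs k \<and> hamming u u' \<le> \<rho>}"

definition locally_binary :: "('a list \<Rightarrow> 'b) \<Rightarrow> nat \<Rightarrow> nat \<Rightarrow> bool" where
  "locally_binary f k \<rho> \<longleftrightarrow> (\<forall>u \<in> vecs k. card (ball_img f k u \<rho>) \<le> 2)"

text \<open>Existence of an (f : dd, df)-FCC with redundancy r: systematic encoding u \<mapsto> u @ p u.\<close>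
definition is_fcc :: "('a list \<Rightarrow> 'b) \<Rightarrow> nat \<Rightarrow> nat \<Rightarrow> nat \<Rightarrow> nat \<Rightarrow> ('a list \<Rightarrow> 'a list) \<Rightarrow> bool" where
  "is_fcc f k dd df r p \<longleftrightarrow>
     (\<forall>u \<in> vecs k. length (p u) = r) \<and>
     (\<forall>u1 \<in> vecs k. \<forall>u2 \<in> vecs k. u1 \<noteq> u2 \<longrightarrow> hamming (u1 @ p u1) (u2 @ p u2) \<ge> dd) \<and>
     (\<forall>u1 \<in> vecs k. \<forall>u2 \<in> vecs k. f u1 \<noteq> f u2 \<longrightarrow> hamming (u1 @ p u1) (u2 @ p u2) \<ge> df)"

definition min_redundancy :: "('a list \<Rightarrow> 'b) \<Rightarrow> nat \<Rightarrow> nat \<Rightarrow> nat \<Rightarrow> nat" where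
  "min_redundancy f k dd df = (LEAST r. \<exists>p. is_fcc f k dd df r p)"

definition linear_code :: "nat \<Rightarrow> ('a::field) list set \<Rightarrow> bool" where
  "linear_code n C \<longleftrightarrow> C \<subseteq> vecs n \<and> replicate n 0 \<in> C \<and>
     (\<forall>x \<in> C. \<forall>y \<in> C. map2 (+) x y \<in> C) \<and>
     (\<forall>c. \<forall>x \<in> C. map ((*) c) x \<in> C)"

definition min_distance :: "'a list set \<Rightarrow> nat" where
  "min_distance C = Min {hamming x y | x y. x \<in> C \<and> y \<in> C \<and> x \<noteq> y}"

text \<open>A linear [n,k,d] code over the finite field 'a: dimension k means q^k codewords.\<close>
definition linear_nkd_code :: "nat \<Rightarrow> nat \<Rightarrow> nat \<Rightarrow> ('a::{finite,field}) list set \<Rightarrow> bool" where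
  "linear_nkd_code n k d C \<longleftrightarrow> linear_code n C \<and> card C = card (UNIV :: 'a set) ^ k \<and> min_distance C = d"

definition linear_MDS_code :: "nat \<Rightarrow> nat \<Rightarrow> nat \<Rightarrow> ('a::{finite,field}) list set \<Rightarrow> bool" where
  "linear_MDS_code n k d C \<longleftrightarrow> linear_nkd_code n k d C \<and> d = n - k + 1 \<and> k \<le> n"

end

theory Submission
  imports Defs
begin

definition hz :: "'a list \<Rightarrow> 'a list \<Rightarrow> nat" where
  "hz x y = length (filter (\<lambda>(a,b). a \<noteq> b) (zip x y))"

lemma card_Suc_split:
  "card {i. i < Suc n \<and> P i} = (if P 0 then 1 else 0) + card {i. i < n \<and> P (Suc i)}"
proof -
  have e: "{i. i < Suc n \<and> P i} = ({0} \<inter> {i. P i}) \<union> Suc ` {i. i < n \<and> P (Suc i)}"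
    by (auto simp: image_iff less_Suc_eq_0_disj)
  have "card (({0} \<inter> {i. P i}) \<union> Suc ` {i. i < n \<and> P (Suc i)})
        = card ({0} \<inter> {i. P i}) + card (Suc ` {i. i < n \<and> P (Suc i)})"
    by (rule card_Un_disjoint) auto
  also have "card (Suc ` {i. i < n \<and> P (Suc i)}) = card {i. i < n \<and> P (Suc i)}"
    by (rule card_image) auto
  also have "card ({0} \<inter> {i. P i}) = (if P 0 then 1 else 0)" by auto
  finally show ?thesis using e by simp
qed

lemma hamming_hz: "length x = length y \<Longrightarrow> hamming x y = hz x y"
proof (induction x y rule: list_induct2)
  case Nil then show ?case by (simp add: hamming_def hz_def)
next
  case (Cons x xs y ys)
  have "hamming (x#xs) (y#ys) = card {i. i < Suc (length xs) \<and> (x#xs)!i \<noteq> (y#ys)!i}"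
    by (simp add: hamming_def)
  also have "\<dots> = (if x \<noteq> y then 1 else 0) + hamming xs ys"
    by (subst card_Suc_split) (simp add: hamming_def)
  finally show ?case using Cons by (simp add: hz_def)
qed

lemma hz_append: "length a = length c \<Longrightarrow> hz (a @ b) (c @ d) = hz a c + hz b d"
  by (simp add: hz_def)

lemma hz_le: "hz a b \<le> length a"
  unfolding hz_def by (metis length_filter_le length_zip min.bounded_iff nle_le order_trans)

lemma hamming_append: "length a = length c \<Longrightarrow> length b = length d \<Longrightarrow>
   hamming (a @ b) (c @ d) = hamming a c + hamming b d"
  by (simp add: hamming_hz hz_append)

lemma hamming_sym: "length a = length b \<Longrightarrow> hamming a b = hamming b a"
  unfolding hamming_def by (metis)

lemma hamming_le_len: "length a = length b \<Longrightarrow> hamming a b \<le> length a"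
  by (simp add: hamming_hz) (metis hz_le)

lemma hamming_0: "length a = length b \<Longrightarrow> hamming a b = 0 \<Longrightarrow> a = b"
  unfolding hamming_def
  by (simp add: nth_equalityI)

lemma path_lemma0:
  "hamming v w = n \<Longrightarrow> length v = k \<Longrightarrow> length w = k \<Longrightarrow> f v \<noteq> f w \<Longrightarrow>
   \<exists>x y. length x = k \<and> length y = k \<and> hamming x y \<le> 1 \<and> f x \<noteq> f y"
proof (induction n arbitrary: v rule: less_induct)
  case (less n)
  have "v \<noteq> w" using less by auto
  then have "hamming v w \<noteq> 0" using hamming_0[of v w] less by auto
  then obtain i where i: "i < length v" "v ! i \<noteq> w ! i"
    unfolding hamming_def by (metis (mono_tags, lifting) Collect_empty_eq card.empty)
  define v' where "v' = v[i := w ! i]"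
  have lv': "length v' = k" using less by (simp add: v'_def)
  have S: "{j. j < length v' \<and> v' ! j \<noteq> w ! j} = {j. j < length v \<and> v ! j \<noteq> w ! j} - {i}"
  proof (rule set_eqI)
    fix x show "x \<in> {j. j < length v' \<and> v' ! j \<noteq> w ! j} \<longleftrightarrow> x \<in> {j. j < length v \<and> v ! j \<noteq> w ! j} - {i}"
      using i by (cases "x = i") (simp_all add: v'_def)
  qed
  have "hamming v' w < hamming v w"
    unfolding hamming_def S
    by (rule card_Diff1_less) (use i in auto)
  moreover have "hamming v v' \<le> 1"
  proof -
    have "{j. j < length v \<and> v ! j \<noteq> v' ! j} \<subseteq> {i}"
    proof
      fix x assume "x \<in> {j. j < length v \<and> v ! j \<noteq> v' ! j}"
      then have "v ! x \<noteq> v' ! x" by simp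
      then have "x = i" unfolding v'_def by (metis nth_list_update_neq)
      then show "x \<in> {i}" by simp
    qed
    then have "card {j. j < length v \<and> v ! j \<noteq> v' ! j} \<le> card {i}"
      by (intro card_mono) auto
    then show ?thesis unfolding hamming_def by simp
  qed
  ultimately show ?case
  proof (cases "f v = f v'")
    case True
    then have "f v' \<noteq> f w" using less by simp
    then show ?thesis using less.IH[OF _ refl lv'] less.prems \<open>hamming v' w < hamming v w\<close> by blast
  next
    case False
    then show ?thesis using \<open>hamming v v' \<le> 1\<close> less.prems lv' by blast
  qed
qed

lemma path_lemma:
  "length v = k \<Longrightarrow> length w = k \<Longrightarrow> f v \<noteq> f w \<Longrightarrow>
   \<exists>x y. length x = k \<and> length y = k \<and> hamming x y \<le> 1 \<and> f x \<noteq> f y"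
  using path_lemma0 by blast


lemma hamming_refl: "hamming x x = 0"
  by (simp add: hamming_def)

lemma finite_vecs: "finite (vecs m :: ('a::finite) list set)"
proof -
  have "vecs m = {xs :: 'a list. set xs \<subseteq> UNIV \<and> length xs = m}" by (simp add: vecs_def)
  then show ?thesis using finite_lists_length_eq[of "UNIV :: 'a set" m] by simp
qed

lemma card_vecs: "card (vecs m :: ('a::finite) list set) = card (UNIV :: 'a set) ^ m"
proof -
  have "vecs m = {xs :: 'a list. set xs \<subseteq> UNIV \<and> length xs = m}" by (simp add: vecs_def)
  then show ?thesis using card_lists_length_eq[of "UNIV :: 'a set" m] by simp
qed

lemma hz_single: "hz [a] [b] = (if a \<noteq> b then 1 else 0)"
  by (simp add: hz_def)

theorem corollary10:
  fixes f :: "('a::{finite,field}) list \<Rightarrow> 'b"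
    and k dd n :: nat
  assumes "card (f ` vecs k) \<ge> 2"
    and "dd \<ge> 1"
    and "locally_binary f k dd"
    and "\<exists>C :: 'a list set. linear_MDS_code n k dd C"
  shows "min_redundancy f k dd (dd + 1) = dd"
proof -
  obtain C :: "'a list set" where MDS: "linear_MDS_code n k dd C" using assms(4) by blast
  have Csub: "C \<subseteq> vecs n" and cardC: "card C = card (UNIV :: 'a set) ^ k" and md: "min_distance C = dd"
    and ddn: "dd = n - k + 1" and kn: "k \<le> n"
    using MDS by (auto simp: linear_MDS_code_def linear_nkd_code_def linear_code_def)
  have finC: "finite C" using Csub finite_vecs finite_subset by blast
  have lenC: "length c = n" if "c \<in> C" for c using Csub that by (auto simp: vecs_def)
  have mind: "dd \<le> hamming c1 c2" if "c1 \<in> C" "c2 \<in> C" "c1 \<noteq> c2" for c1 c2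
  proof -
    let ?D = "{hamming x y | x y. x \<in> C \<and> y \<in> C \<and> x \<noteq> y}"
    have "?D \<subseteq> (\<lambda>(x,y). hamming x y) ` (C \<times> C)" by auto
    then have "finite ?D" using finC by (meson finite_SigmaI finite_imageI finite_subset)
    moreover have "hamming c1 c2 \<in> ?D" using that by blast
    ultimately have "Min ?D \<le> hamming c1 c2" by (rule Min_le)
    then show ?thesis using md by (simp add: min_distance_def)
  qed
  have splitC: "hamming c1 c2 = hamming (take k c1) (take k c2) + hamming (drop k c1) (drop k c2)"
    if "c1 \<in> C" "c2 \<in> C" for c1 c2
  proof -
    have "hamming c1 c2 = hamming (take k c1 @ drop k c1) (take k c2 @ drop k c2)" by simp
    also have "\<dots> = hamming (take k c1) (take k c2) + hamming (drop k c1) (drop k c2)"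
      by (rule hamming_append) (use that lenC kn in auto)
    finally show ?thesis .
  qed
  have inj: "inj_on (take k) C"
  proof (rule inj_onI, rule ccontr)
    fix c1 c2 assume h: "c1 \<in> C" "c2 \<in> C" "take k c1 = take k c2" "c1 \<noteq> c2"
    have "hamming (drop k c1) (drop k c2) \<le> length (drop k c1)"
      by (rule hamming_le_len) (use h lenC in auto)
    then have "hamming c1 c2 \<le> n - k" using splitC[OF h(1,2)] h(3) hamming_refl[of "take k c2"] lenC[OF h(1)] by simp
    then show False using mind[OF h(1,2,4)] ddn by simp
  qed
  have cv: "card (vecs k :: 'a list set) = card (UNIV::'a set) ^ k" by (rule card_vecs)
  have img: "take k ` C = vecs k"
  proof (rule card_subset_eq)
    show "finite (vecs k :: 'a list set)" by (rule finite_vecs)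
    show "take k ` C \<subseteq> vecs k" using lenC kn by (auto simp: vecs_def)
    show "card (take k ` C) = card (vecs k :: 'a list set)" by (metis card_image[OF inj] cardC cv)
  qed
  define cw where "cw u = (THE c. c \<in> C \<and> take k c = u)" for u
  have cw: "cw u \<in> C \<and> take k (cw u) = u" if "u \<in> vecs k" for u
  proof -
    have "\<exists>!c. c \<in> C \<and> take k c = u"
    proof -
      have "u \<in> take k ` C" using that img by simp
      then obtain c where c: "c \<in> C" "take k c = u" by blast
      show ?thesis
      proof (rule ex1I[of _ c])
        show "c \<in> C \<and> take k c = u" using c by simp
        fix c' assume "c' \<in> C \<and> take k c' = u"
        then show "c' = c" using c inj unfolding inj_on_def by auto
      qed
    qed
    then show ?thesis unfolding cw_def by (rule theI')
  qed
  define b where "b u = (if f u = (SOME x. x \<in> ball_img f k u dd) then (1::'a) else 0)" for u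
  define p where "p u = drop k (cw u) @ [b u]" for u
  have up: "u @ p u = cw u @ [b u]" if "u \<in> vecs k" for u
  proof -
    have "u @ p u = take k (cw u) @ drop k (cw u) @ [b u]" using cw[OF that] by (simp add: p_def)
    then show ?thesis by (metis append_assoc append_take_drop_id)
  qed
  have lenp: "length (p u) = dd" if "u \<in> vecs k" for u
    using cw[OF that] lenC ddn kn by (simp add: p_def)
  have lenu: "length u = k" if "u \<in> vecs k" for u using that by (simp add: vecs_def)
  have ball: "ball_img f k u dd = {f u, f v}"
    if "u \<in> vecs k" "v \<in> vecs k" "hamming u v \<le> dd" "f u \<noteq> f v" for u v
  proof -
    have fin: "finite (ball_img f k u dd)"
    proof -
      have "ball_img f k u dd \<subseteq> f ` vecs k" by (auto simp: ball_img_def)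
      then show ?thesis using finite_vecs finite_subset by blast
    qed
    have sub: "{f u, f v} \<subseteq> ball_img f k u dd"
    proof -
      have "f u \<in> ball_img f k u dd" unfolding ball_img_def
        using that(1) hamming_refl[of u] by force
      moreover have "f v \<in> ball_img f k u dd" unfolding ball_img_def
        using that(2,3) by force
      ultimately show ?thesis by simp
    qed
    have "card (ball_img f k u dd) \<le> 2" using assms(3) that(1) by (simp add: locally_binary_def)
    then have "card (ball_img f k u dd) \<le> card {f u, f v}" using that(4) by simp
    then show ?thesis using card_seteq[OF fin sub] by simp
  qed
  have lcw: "length (cw u) = n" if "u \<in> vecs k" for u
    using cw[OF that] lenC by blast
  have cwinj: "cw u1 \<noteq> cw u2" if "u1 \<in> vecs k" "u2 \<in> vecs k" "u1 \<noteq> u2" for u1 u2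
  proof
    assume "cw u1 = cw u2"
    then have "take k (cw u1) = take k (cw u2)" by simp
    then show False using cw[OF that(1)] cw[OF that(2)] that(3) by simp
  qed
  have fcc: "is_fcc f k dd (dd + 1) dd p"
    unfolding is_fcc_def
  proof (intro conjI ballI impI)
    fix u :: "'a list" assume "u \<in> vecs k" then show "length (p u) = dd" by (rule lenp)
  next
    fix u1 u2 :: "'a list" assume h: "u1 \<in> vecs k" "u2 \<in> vecs k" "u1 \<noteq> u2"
    have c: "cw u1 \<noteq> cw u2" by (rule cwinj[OF h])
    have "hamming (cw u1 @ [b u1]) (cw u2 @ [b u2]) = hamming (cw u1) (cw u2) + hamming [b u1] [b u2]"
      by (rule hamming_append) (simp_all add: lcw[OF h(1)] lcw[OF h(2)])
    then show "dd \<le> hamming (u1 @ p u1) (u2 @ p u2)"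
      using up[OF h(1)] up[OF h(2)] mind[OF _ _ c] cw[OF h(1)] cw[OF h(2)] by simp
  next
    fix u1 u2 :: "'a list" assume h: "u1 \<in> vecs k" "u2 \<in> vecs k" "f u1 \<noteq> f u2"
    have e1: "hamming (u1 @ p u1) (u2 @ p u2) = hamming u1 u2 + hamming (p u1) (p u2)"
      by (rule hamming_append) (simp_all add: lenu[OF h(1)] lenu[OF h(2)] lenp[OF h(1)] lenp[OF h(2)])
    have e2: "hamming (p u1) (p u2) = hamming (drop k (cw u1)) (drop k (cw u2)) + hamming [b u1] [b u2]"
      unfolding p_def by (rule hamming_append) (simp_all add: lcw[OF h(1)] lcw[OF h(2)])
    have e3: "hamming (cw u1) (cw u2) = hamming u1 u2 + hamming (drop k (cw u1)) (drop k (cw u2))"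
      using splitC[of "cw u1" "cw u2"] cw[OF h(1)] cw[OF h(2)] by simp
    have ne: "cw u1 \<noteq> cw u2" using cwinj[OF h(1,2)] h(3) by blast
    have md2: "dd \<le> hamming (cw u1) (cw u2)" using mind[OF _ _ ne] cw[OF h(1)] cw[OF h(2)] by simp
    show "dd + 1 \<le> hamming (u1 @ p u1) (u2 @ p u2)"
    proof (cases "hamming u1 u2 \<le> dd")
      case True
      have h21: "hamming u2 u1 \<le> dd" using True hamming_sym[of u1 u2] lenu[OF h(1)] lenu[OF h(2)] by simp
      have B: "ball_img f k u1 dd = ball_img f k u2 dd"
        using ball[OF h(1,2) True h(3)] ball[OF h(2,1) h21] h(3) by auto
      define s where "s = (SOME x. x \<in> ball_img f k u1 dd)"
      have "s \<in> ball_img f k u1 dd" unfolding s_def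
        using ball[OF h(1,2) True h(3)] by (metis insertI1 someI)
      then have "s = f u1 \<or> s = f u2" using ball[OF h(1,2) True h(3)] by auto
      have s2: "s = (SOME x. x \<in> ball_img f k u2 dd)" using B s_def by simp
      have "b u1 = (if f u1 = s then 1 else 0)" unfolding b_def s_def by simp
      moreover have "b u2 = (if f u2 = s then 1 else 0)" unfolding b_def s2 by simp
      ultimately have "b u1 \<noteq> b u2" using \<open>s = f u1 \<or> s = f u2\<close> h(3) by auto
      then have "hamming [b u1] [b u2] = 1" by (simp add: hamming_hz hz_single)
      then show ?thesis using e1 e2 e3 md2 by simp
    next
      case False
      then show ?thesis using e1 e2 by simp
    qed
  qed
  have lower: "dd \<le> r" if ex: "\<exists>p. is_fcc f k dd (dd + 1) r p" for r
  proof -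
    obtain q where q: "is_fcc f k dd (dd + 1) r q" using ex by blast
    have "\<exists>v\<in>vecs k. \<exists>w\<in>vecs k. f v \<noteq> f w"
    proof (rule ccontr)
      assume "\<not> ?thesis"
      then have all: "\<forall>v\<in>vecs k. \<forall>w\<in>vecs k. f v = f w" by blast
      have v0: "replicate k (0::'a) \<in> vecs k" by (simp add: vecs_def)
      have "f ` vecs k \<subseteq> {f (replicate k (0::'a))}" using all v0 by blast
      then have "card (f ` vecs k) \<le> card {f (replicate k (0::'a))}" by (intro card_mono) auto
      then show False using assms(1) by simp
    qed
    then obtain v w where vw: "v \<in> vecs k" "w \<in> vecs k" "f v \<noteq> f w" by blast
    obtain x y where xy: "length x = k" "length y = k" "hamming x y \<le> 1" "f x \<noteq> f y"
      using path_lemma[of v k w f] vw lenu[OF vw(1)] lenu[OF vw(2)] by blast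
    have xv: "x \<in> vecs k" "y \<in> vecs k" using xy by (auto simp: vecs_def)
    have qlen: "\<forall>u\<in>vecs k. length (q u) = r"
      and qf: "\<forall>u1\<in>vecs k. \<forall>u2\<in>vecs k. f u1 \<noteq> f u2 \<longrightarrow> hamming (u1 @ q u1) (u2 @ q u2) \<ge> dd + 1"
      using q unfolding is_fcc_def by blast+
    have lx: "length (q x) = r" and ly: "length (q y) = r" using qlen xv by blast+
    have "dd + 1 \<le> hamming (x @ q x) (y @ q y)" using qf xv xy(4) by blast
    also have "\<dots> = hamming x y + hamming (q x) (q y)"
      by (rule hamming_append) (simp_all add: xy lx ly)
    finally have A: "dd + 1 \<le> hamming x y + hamming (q x) (q y)" .
    have "hamming (q x) (q y) \<le> r"
      using hamming_le_len[of "q x" "q y"] lx ly by simp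
    then show ?thesis using A xy(3) by simp
  qed
  show ?thesis unfolding min_redundancy_def
    by (rule Least_equality) (use fcc lower in auto)
qed

end
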